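(* Let $R$ be a commutative ring and $S$ a multiplicative subset of $R$. If $R$ is a $u$-$S$-coherent ring with respect to some $s\in S$, then the localization $R_s$ is a coherent ring.
   Context: A multiplicative subset $S$ contains $1$ and is closed under products. For $s\in S$, $R_s$ is the localization of $R$ at $\{1,s,s^2,\dots\}$. $M$ is $S$-finite with respect to $s$ if there is a finitely generated submodule $F\subseteq M$ with $sM\subseteq F$. $M$ is $u$-$S$-finitely presented with respect to $s$ if there is an exact sequence $0\to T_1\to F\to M\to T_2\to 0$ with $F$ finitely presented and $sT_1=sT_2=0$. $R$ is $u$-$S$-coherent with respect to $s$ if $R$ is $S$-finite with respect to $s$ and every finitely generated ideal of $R$ is $u$-$S$-finitely presented with respect to $s$. *)

theory Defs
  imports "HOL-Algebra.Algebra"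
begin

definition mult_subset :: "('a, 'b) ring_scheme \<Rightarrow> 'a set \<Rightarrow> bool" where
  "mult_subset R S \<longleftrightarrow> S \<subseteq> carrier R \<and> \<one>\<^bsub>R\<^esub> \<in> S \<and>
     (\<forall>x\<in>S. \<forall>y\<in>S. x \<otimes>\<^bsub>R\<^esub> y \<in> S)"

text \<open>The free module R^n: vectors indexed by {..<n}, zero outside.\<close>
definition rvec :: "('a, 'b) ring_scheme \<Rightarrow> nat \<Rightarrow> (nat \<Rightarrow> 'a) set" where
  "rvec R n = {v. (\<forall>i<n. v i \<in> carrier R) \<and> (\<forall>i\<ge>n. v i = \<zero>\<^bsub>R\<^esub>)}"

definition lincomb :: "('a, 'b) ring_scheme \<Rightarrow> nat \<Rightarrow> (nat \<Rightarrow> 'a) \<Rightarrow> (nat \<Rightarrow> 'a) \<Rightarrow> 'a" where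
  "lincomb R n v a = (\<Oplus>\<^bsub>R\<^esub>i\<in>{..<n}. v i \<otimes>\<^bsub>R\<^esub> a i)"

definition vspan :: "('a, 'b) ring_scheme \<Rightarrow> nat \<Rightarrow> nat \<Rightarrow> (nat \<Rightarrow> nat \<Rightarrow> 'a) \<Rightarrow> (nat \<Rightarrow> 'a) set" where
  "vspan R n m w = {(\<lambda>i. if i < n then (\<Oplus>\<^bsub>R\<^esub>j\<in>{..<m}. c j \<otimes>\<^bsub>R\<^esub> w j i) else \<zero>\<^bsub>R\<^esub>)
                     | c. \<forall>j<m. c j \<in> carrier R}"

definition fin_gen_ideal :: "('a, 'b) ring_scheme \<Rightarrow> 'a set \<Rightarrow> bool" where
  "fin_gen_ideal R I \<longleftrightarrow> (\<exists>A. finite A \<and> A \<subseteq> carrier R \<and> I = Idl\<^bsub>R\<^esub> A)"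

definition fin_pres_ideal :: "('a, 'b) ring_scheme \<Rightarrow> 'a set \<Rightarrow> bool" where
  "fin_pres_ideal R I \<longleftrightarrow>
    (\<exists>n a. (\<forall>i<n. a i \<in> carrier R) \<and> I = {lincomb R n v a | v. v \<in> rvec R n} \<and>
       (\<exists>m w. (\<forall>j<m. w j \<in> rvec R n) \<and>
              {v \<in> rvec R n. lincomb R n v a = \<zero>\<^bsub>R\<^esub>} = vspan R n m w))"

definition coherent_ring :: "('a, 'b) ring_scheme \<Rightarrow> bool" where
  "coherent_ring R \<longleftrightarrow> (\<forall>I. ideal I R \<and> fin_gen_ideal R I \<longrightarrow> fin_pres_ideal R I)"

definition S_finite_ring_wrt :: "('a, 'b) ring_scheme \<Rightarrow> 'a \<Rightarrow> bool" where
  "S_finite_ring_wrt R s \<longleftrightarrow>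
    (\<exists>A. finite A \<and> A \<subseteq> carrier R \<and> (\<forall>r\<in>carrier R. s \<otimes>\<^bsub>R\<^esub> r \<in> Idl\<^bsub>R\<^esub> A))"

text \<open>An ideal I is u-S-finitely presented w.r.t. s: there is a finitely presented module
  F = R^n / K (K = span of w 0..w (m-1)) and an R-linear f : F \<rightarrow> I (induced by
  e_i \<mapsto> a i, vanishing on K) with s \<cdot> ker f = 0 and s \<cdot> coker f = 0, i.e. an exact
  sequence 0 \<rightarrow> T1 \<rightarrow> F \<rightarrow> I \<rightarrow> T2 \<rightarrow> 0 with T1 = ker f, T2 = coker f.\<close>
definition u_S_fin_pres_ideal_wrt :: "('a, 'b) ring_scheme \<Rightarrow> 'a \<Rightarrow> 'a set \<Rightarrow> bool" where
  "u_S_fin_pres_ideal_wrt R s I \<longleftrightarrow>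
    (\<exists>n a m w. (\<forall>i<n. a i \<in> I) \<and> (\<forall>j<m. w j \<in> rvec R n) \<and>
       (\<forall>v\<in>vspan R n m w. lincomb R n v a = \<zero>\<^bsub>R\<^esub>) \<and>
       (\<forall>v\<in>rvec R n. lincomb R n v a = \<zero>\<^bsub>R\<^esub> \<longrightarrow> (\<lambda>i. s \<otimes>\<^bsub>R\<^esub> v i) \<in> vspan R n m w) \<and>
       (\<forall>x\<in>I. s \<otimes>\<^bsub>R\<^esub> x \<in> {lincomb R n v a | v. v \<in> rvec R n}))"

definition u_S_coherent_wrt :: "('a, 'b) ring_scheme \<Rightarrow> 'a \<Rightarrow> bool" where
  "u_S_coherent_wrt R s \<longleftrightarrow> S_finite_ring_wrt R s \<and>
     (\<forall>I. ideal I R \<and> fin_gen_ideal R I \<longrightarrow> u_S_fin_pres_ideal_wrt R s I)"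

text \<open>Localization R_s = R[1/s]: fractions a / s^m, (a,m) ~ (b,n) iff
  s^k (a s^n - b s^m) = 0 for some k.\<close>
definition loc_rel :: "('a, 'b) ring_scheme \<Rightarrow> 'a \<Rightarrow> ('a \<times> nat) \<Rightarrow> ('a \<times> nat) \<Rightarrow> bool" where
  "loc_rel R s p q \<longleftrightarrow> (\<exists>k::nat. s [^]\<^bsub>R\<^esub> k \<otimes>\<^bsub>R\<^esub>
      (fst p \<otimes>\<^bsub>R\<^esub> s [^]\<^bsub>R\<^esub> snd q \<ominus>\<^bsub>R\<^esub> fst q \<otimes>\<^bsub>R\<^esub> s [^]\<^bsub>R\<^esub> snd p) = \<zero>\<^bsub>R\<^esub>)"

definition loc_class :: "('a, 'b) ring_scheme \<Rightarrow> 'a \<Rightarrow> 'a \<Rightarrow> nat \<Rightarrow> ('a \<times> nat) set" where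
  "loc_class R s a m = {q \<in> carrier R \<times> UNIV. loc_rel R s (a, m) q}"

definition loc_mult :: "('a, 'b) ring_scheme \<Rightarrow> 'a \<Rightarrow> ('a \<times> nat) set \<Rightarrow> ('a \<times> nat) set \<Rightarrow> ('a \<times> nat) set" where
  "loc_mult R s U V = {x. \<exists>p\<in>U. \<exists>q\<in>V. x \<in> loc_class R s (fst p \<otimes>\<^bsub>R\<^esub> fst q) (snd p + snd q)}"

definition loc_add :: "('a, 'b) ring_scheme \<Rightarrow> 'a \<Rightarrow> ('a \<times> nat) set \<Rightarrow> ('a \<times> nat) set \<Rightarrow> ('a \<times> nat) set" where
  "loc_add R s U V = {x. \<exists>p\<in>U. \<exists>q\<in>V.
     x \<in> loc_class R s (fst p \<otimes>\<^bsub>R\<^esub> s [^]\<^bsub>R\<^esub> snd q \<oplus>\<^bsub>R\<^esub> fst q \<otimes>\<^bsub>R\<^esub> s [^]\<^bsub>R\<^esub> snd p)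
                   (snd p + snd q)}"

definition loc_carrier :: "('a, 'b) ring_scheme \<Rightarrow> 'a \<Rightarrow> ('a \<times> nat) set set" where
  "loc_carrier R s = {loc_class R s a m | a m. a \<in> carrier R}"

definition localization :: "('a, 'b) ring_scheme \<Rightarrow> 'a \<Rightarrow> ('a \<times> nat) set ring" where
  "localization R s =
    \<lparr> carrier = loc_carrier R s,
      Group.monoid.mult = loc_mult R s,
      Group.monoid.one = loc_class R s \<one>\<^bsub>R\<^esub> 0,
      Ring.ring.zero = loc_class R s \<zero>\<^bsub>R\<^esub> 0,
      Ring.ring.add = loc_add R s \<rparr>"

end

theory Submission
  imports Defs
begin


locale locz = cring R for R (structure) + fixes s assumes s_carr[simp]: "s \<in> carrier R"
begin

lemma rel_iff:
  assumes "a \<in> carrier R" "b \<in> carrier R"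
  shows "loc_rel R s (a,m) (b,n) \<longleftrightarrow> (\<exists>k::nat. s[^]k \<otimes> (a \<otimes> s[^]n) = s[^]k \<otimes> (b \<otimes> s[^]m))"
proof -
  have "s [^] k \<otimes> (a \<otimes> s [^] n \<ominus> b \<otimes> s [^] m) = s[^]k \<otimes> (a \<otimes> s[^]n) \<ominus> s[^]k \<otimes> (b \<otimes> s[^]m)" for k::nat
    using assms by (simp add: minus_eq r_distr r_minus)
  then show ?thesis unfolding loc_rel_def using assms by simp
qed

lemma rel_refl: "a \<in> carrier R \<Longrightarrow> loc_rel R s (a,m) (a,m)"
  by (auto simp: rel_iff)

lemma rel_sym: "a \<in> carrier R \<Longrightarrow> b \<in> carrier R \<Longrightarrow> loc_rel R s (a,m) (b,n) \<Longrightarrow> loc_rel R s (b,n) (a,m)"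
  by (metis rel_iff)

lemma rel_trans:
  assumes c: "a \<in> carrier R" "b \<in> carrier R" "c \<in> carrier R"
    and "loc_rel R s (a,m) (b,n)" "loc_rel R s (b,n) (c,p)"
  shows "loc_rel R s (a,m) (c,p)"
proof -
  obtain k l :: nat where k: "s[^]k \<otimes> (a \<otimes> s[^]n) = s[^]k \<otimes> (b \<otimes> s[^]m)"
    and l: "s[^]l \<otimes> (b \<otimes> s[^]p) = s[^]l \<otimes> (c \<otimes> s[^]n)"
    using assms by (auto simp: rel_iff)
  have "s[^](k+l+n) \<otimes> (a \<otimes> s[^]p) = (s[^]k \<otimes> (a \<otimes> s[^]n)) \<otimes> (s[^]l \<otimes> s[^]p)"
    using c by (simp add: nat_pow_mult[symmetric] m_ac)
  also have "\<dots> = (s[^]l \<otimes> (b \<otimes> s[^]p)) \<otimes> (s[^]k \<otimes> s[^]m)"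
    using c by (simp add: k m_ac)
  also have "\<dots> = s[^](k+l+n) \<otimes> (c \<otimes> s[^]m)"
    using c by (simp add: l nat_pow_mult[symmetric] m_ac)
  finally show ?thesis using c by (auto simp: rel_iff)
qed


lemma class_eq:
  assumes "a \<in> carrier R" "b \<in> carrier R" "loc_rel R s (a,m) (b,n)"
  shows "loc_class R s a m = loc_class R s b n"
proof -
  have s: "loc_rel R s (b,n) (a,m)" using assms rel_sym by blast
  have "loc_rel R s (a,m) q \<longleftrightarrow> loc_rel R s (b,n) q" if "fst q \<in> carrier R" for q
  proof -
    obtain q1 q2 where q: "q = (q1,q2)" by (cases q)
    show ?thesis using that assms(1,2) rel_trans[of a b q1 m n q2] rel_trans[of b a q1 n m q2] assms(3) s
      unfolding q by auto
  qed
  then show ?thesis unfolding loc_class_def by auto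
qed

lemma in_class: "a \<in> carrier R \<Longrightarrow> (a,m) \<in> loc_class R s a m"
  by (simp add: loc_class_def rel_refl)

lemma class_mem: "q \<in> loc_class R s a m \<Longrightarrow> fst q \<in> carrier R \<and> loc_rel R s (a,m) q"
  by (auto simp: loc_class_def)

lemma mult_compat:
  assumes c: "a \<in> carrier R" "b \<in> carrier R" "p1 \<in> carrier R" "q1 \<in> carrier R"
    and "loc_rel R s (a,m) (p1,p2)" "loc_rel R s (b,n) (q1,q2)"
  shows "loc_rel R s (a \<otimes> b, m+n) (p1 \<otimes> q1, p2 + q2)"
proof -
  obtain k l :: nat where k: "s[^]k \<otimes> (a \<otimes> s[^]p2) = s[^]k \<otimes> (p1 \<otimes> s[^]m)"
    and l: "s[^]l \<otimes> (b \<otimes> s[^]q2) = s[^]l \<otimes> (q1 \<otimes> s[^]n)"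
    using assms by (auto simp: rel_iff)
  have "s[^](k+l) \<otimes> (a \<otimes> b \<otimes> s[^](p2+q2)) = (s[^]k \<otimes> (a \<otimes> s[^]p2)) \<otimes> (s[^]l \<otimes> (b \<otimes> s[^]q2))"
    using c by (simp add: nat_pow_mult[symmetric] m_ac)
  also have "\<dots> = (s[^]k \<otimes> (p1 \<otimes> s[^]m)) \<otimes> (s[^]l \<otimes> (q1 \<otimes> s[^]n))"
    by (simp add: k l)
  also have "\<dots> = s[^](k+l) \<otimes> (p1 \<otimes> q1 \<otimes> s[^](m+n))"
    using c by (simp add: nat_pow_mult[symmetric] m_ac)
  finally show ?thesis using c by (auto simp: rel_iff)
qed

lemma mult_class:
  assumes "a \<in> carrier R" "b \<in> carrier R"
  shows "loc_mult R s (loc_class R s a m) (loc_class R s b n) = loc_class R s (a \<otimes> b) (m+n)"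
proof
  show "loc_class R s (a \<otimes> b) (m+n) \<subseteq> loc_mult R s (loc_class R s a m) (loc_class R s b n)"
  proof
    fix x assume x: "x \<in> loc_class R s (a \<otimes> b) (m+n)"
    show "x \<in> loc_mult R s (loc_class R s a m) (loc_class R s b n)"
      unfolding loc_mult_def
    proof (rule CollectI, rule bexI[where x="(a,m)"], rule bexI[where x="(b,n)"])
      show "x \<in> loc_class R s (fst (a, m) \<otimes> fst (b, n)) (snd (a, m) + snd (b, n))" using x by simp
      show "(b,n) \<in> loc_class R s b n" by (rule in_class) fact
      show "(a,m) \<in> loc_class R s a m" by (rule in_class) fact
    qed
  qed
  show "loc_mult R s (loc_class R s a m) (loc_class R s b n) \<subseteq> loc_class R s (a \<otimes> b) (m+n)"
  proof
    fix x assume "x \<in> loc_mult R s (loc_class R s a m) (loc_class R s b n)"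
    then obtain p q where p: "p \<in> loc_class R s a m" and q: "q \<in> loc_class R s b n"
      and x: "x \<in> loc_class R s (fst p \<otimes> fst q) (snd p + snd q)"
      unfolding loc_mult_def by blast
    have "loc_class R s (fst p \<otimes> fst q) (snd p + snd q) = loc_class R s (a \<otimes> b) (m+n)"
      using class_mem[OF p] class_mem[OF q] assms mult_compat[of a b "fst p" "fst q" m "snd p" n "snd q"]
      by (intro class_eq[symmetric]) auto
    with x show "x \<in> loc_class R s (a \<otimes> b) (m+n)" by simp
  qed
qed

lemma add_compat:
  assumes c: "a \<in> carrier R" "b \<in> carrier R" "p1 \<in> carrier R" "q1 \<in> carrier R"
    and "loc_rel R s (a,0) (p1,p2)" "loc_rel R s (b,0) (q1,q2)"
  shows "loc_rel R s (a \<oplus> b, 0) (p1 \<otimes> s[^]q2 \<oplus> q1 \<otimes> s[^]p2, p2 + q2)"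
proof -
  obtain k l :: nat where k: "s[^]k \<otimes> (a \<otimes> s[^]p2) = s[^]k \<otimes> p1"
    and l: "s[^]l \<otimes> (b \<otimes> s[^]q2) = s[^]l \<otimes> q1"
    using assms by (auto simp: rel_iff)
  have sc: "s[^]k \<in> carrier R" "s[^]l \<in> carrier R" "s[^]p2 \<in> carrier R" "s[^]q2 \<in> carrier R" by auto
  have e1: "s[^](k+l) \<otimes> (a \<otimes> s[^](p2+q2)) = (s[^]k \<otimes> (a \<otimes> s[^]p2)) \<otimes> (s[^]l \<otimes> s[^]q2)"
    using c by (simp add: nat_pow_mult[symmetric] m_ac)
  have e2: "s[^](k+l) \<otimes> (b \<otimes> s[^](p2+q2)) = (s[^]l \<otimes> (b \<otimes> s[^]q2)) \<otimes> (s[^]k \<otimes> s[^]p2)"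
    using c by (simp add: nat_pow_mult[symmetric] m_ac)
  have e3: "s[^](k+l) \<otimes> (p1 \<otimes> s[^]q2) = (s[^]k \<otimes> p1) \<otimes> (s[^]l \<otimes> s[^]q2)"
    using c by (simp add: nat_pow_mult[symmetric] m_ac)
  have e4: "s[^](k+l) \<otimes> (q1 \<otimes> s[^]p2) = (s[^]l \<otimes> q1) \<otimes> (s[^]k \<otimes> s[^]p2)"
    using c by (simp add: nat_pow_mult[symmetric] m_ac)
  have "s[^](k+l) \<otimes> ((a \<oplus> b) \<otimes> s[^](p2+q2)) = s[^](k+l) \<otimes> (a \<otimes> s[^](p2+q2)) \<oplus> s[^](k+l) \<otimes> (b \<otimes> s[^](p2+q2))"
    using c by (simp add: l_distr r_distr del: nat_pow_mult)
  also have "\<dots> = (s[^]k \<otimes> p1) \<otimes> (s[^]l \<otimes> s[^]q2) \<oplus> (s[^]l \<otimes> q1) \<otimes> (s[^]k \<otimes> s[^]p2)"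
    unfolding e1 e2 k l ..
  also have "\<dots> = s[^](k+l) \<otimes> (p1 \<otimes> s[^]q2) \<oplus> s[^](k+l) \<otimes> (q1 \<otimes> s[^]p2)"
    unfolding e3 e4 ..
  also have "\<dots> = s[^](k+l) \<otimes> ((p1 \<otimes> s[^]q2 \<oplus> q1 \<otimes> s[^]p2) \<otimes> s[^](0::nat))"
    using c by (simp add: r_distr del: nat_pow_mult)
  finally have H: "s[^](k+l) \<otimes> ((a \<oplus> b) \<otimes> s[^](p2+q2)) = s[^](k+l) \<otimes> ((p1 \<otimes> s[^]q2 \<oplus> q1 \<otimes> s[^]p2) \<otimes> s[^](0::nat))" .
  have "loc_rel R s (a \<oplus> b, 0) (p1 \<otimes> s [^] q2 \<oplus> q1 \<otimes> s [^] p2, p2 + q2) \<longleftrightarrow>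
    (\<exists>k::nat. s[^]k \<otimes> ((a \<oplus> b) \<otimes> s[^](p2+q2)) = s[^]k \<otimes> ((p1 \<otimes> s[^]q2 \<oplus> q1 \<otimes> s[^]p2) \<otimes> s[^](0::nat)))"
    by (rule rel_iff) (simp_all add: c)
  then show ?thesis by (rule iffD2) (rule exI[of _ "k+l"], rule H)
qed

lemma add_class:
  assumes "a \<in> carrier R" "b \<in> carrier R"
  shows "loc_add R s (loc_class R s a 0) (loc_class R s b 0) = loc_class R s (a \<oplus> b) 0"
proof
  show "loc_class R s (a \<oplus> b) 0 \<subseteq> loc_add R s (loc_class R s a 0) (loc_class R s b 0)"
  proof
    fix x assume x: "x \<in> loc_class R s (a \<oplus> b) 0"
    have "loc_class R s (a \<otimes> s[^](0::nat) \<oplus> b \<otimes> s[^](0::nat)) (0+0) = loc_class R s (a\<oplus>b) 0"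
      using assms by simp
    note eq = this
    show "x \<in> loc_add R s (loc_class R s a 0) (loc_class R s b 0)"
      unfolding loc_add_def
    proof (rule CollectI, rule bexI[where x="(a,0::nat)"], rule bexI[where x="(b,0::nat)"])
      show "x \<in> loc_class R s (fst (a, 0::nat) \<otimes> s [^] snd (b, 0::nat) \<oplus> fst (b, 0::nat) \<otimes> s [^] snd (a, 0::nat)) (snd (a, 0::nat) + snd (b, 0::nat))"
        using x eq by simp
      show "(b,0) \<in> loc_class R s b 0" by (rule in_class) fact
      show "(a,0) \<in> loc_class R s a 0" by (rule in_class) fact
    qed
  qed
  show "loc_add R s (loc_class R s a 0) (loc_class R s b 0) \<subseteq> loc_class R s (a \<oplus> b) 0"
  proof
    fix x assume "x \<in> loc_add R s (loc_class R s a 0) (loc_class R s b 0)"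
    then obtain p q where p: "p \<in> loc_class R s a 0" and q: "q \<in> loc_class R s b 0"
      and x: "x \<in> loc_class R s (fst p \<otimes> s [^] snd q \<oplus> fst q \<otimes> s [^] snd p) (snd p + snd q)"
      unfolding loc_add_def by blast
    have "loc_class R s (fst p \<otimes> s [^] snd q \<oplus> fst q \<otimes> s [^] snd p) (snd p + snd q) = loc_class R s (a \<oplus> b) 0"
      using class_mem[OF p] class_mem[OF q] assms add_compat[of a b "fst p" "fst q" "snd p" "snd q"]
      by (intro class_eq[symmetric]) auto
    with x show "x \<in> loc_class R s (a \<oplus> b) 0" by simp
  qed
qed

lemma zero_class:
  assumes "a \<in> carrier R" "loc_class R s a 0 = loc_class R s \<zero> 0"
  shows "\<exists>t::nat. s[^]t \<otimes> a = \<zero>"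
proof -
  have "(a,0) \<in> loc_class R s \<zero> 0" using assms in_class[of a 0] by simp
  then have "loc_rel R s (\<zero>,0) (a,0)" by (auto simp: loc_class_def)
  then show ?thesis using assms by (auto simp: rel_iff)
qed


abbreviation L where "L \<equiv> localization R s"
definition phi where "phi a = loc_class R s a 0"
definition eL where "eL = loc_class R s \<one> 1"

lemma L_simps: "carrier L = loc_carrier R s" "(\<otimes>\<^bsub>L\<^esub>) = loc_mult R s" "(\<oplus>\<^bsub>L\<^esub>) = loc_add R s"
  "\<one>\<^bsub>L\<^esub> = loc_class R s \<one> 0" "\<zero>\<^bsub>L\<^esub> = loc_class R s \<zero> 0"
  by (simp_all add: localization_def)

lemma class_in: "a \<in> carrier R \<Longrightarrow> loc_class R s a m \<in> carrier L"
  by (auto simp: L_simps loc_carrier_def)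

lemma L_elem: "x \<in> carrier L \<Longrightarrow> \<exists>a m. a \<in> carrier R \<and> x = loc_class R s a m"
  by (auto simp: L_simps loc_carrier_def)

lemma multL: "a \<in> carrier R \<Longrightarrow> b \<in> carrier R \<Longrightarrow>
   loc_class R s a m \<otimes>\<^bsub>L\<^esub> loc_class R s b n = loc_class R s (a \<otimes> b) (m+n)"
  by (simp add: L_simps mult_class)

end

locale locz_ring = locz + assumes ringL: "ring (localization R s)"
begin

lemma cringL: "cring L"
proof -
  interpret L: ring L by (rule ringL)
  have "x \<otimes>\<^bsub>L\<^esub> y = y \<otimes>\<^bsub>L\<^esub> x" if xy: "x \<in> carrier L" "y \<in> carrier L" for x y
  proof -
    obtain a m b n where "a \<in> carrier R" "b \<in> carrier R" "x = loc_class R s a m" "y = loc_class R s b n"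
      using L_elem[OF xy(1)] L_elem[OF xy(2)] by blast
    then show ?thesis by (simp add: multL m_comm add.commute)
  qed
  then show ?thesis unfolding cring_def comm_monoid_def comm_monoid_axioms_def
    using ringL L.is_monoid by blast
qed

sublocale L: cring L by (rule cringL)

lemma phi_carr[simp]: "a \<in> carrier R \<Longrightarrow> phi a \<in> carrier L"
  by (simp add: phi_def class_in)

lemma eL_carr[simp]: "eL \<in> carrier L"
  by (simp add: eL_def class_in)

lemma phi_hom: "phi \<in> ring_hom R L"
proof (rule ring_hom_memI)
  show "phi (x \<otimes> y) = phi x \<otimes>\<^bsub>L\<^esub> phi y" if "x \<in> carrier R" "y \<in> carrier R" for x y
    using that by (simp add: phi_def multL)
  show "phi (x \<oplus> y) = phi x \<oplus>\<^bsub>L\<^esub> phi y" if "x \<in> carrier R" "y \<in> carrier R" for x y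
    using that by (simp add: phi_def L_simps add_class)
  show "phi \<one> = \<one>\<^bsub>L\<^esub>" by (simp add: phi_def L_simps)
qed simp

sublocale phi: ring_hom_ring R L phi
  by (rule ring_hom_ringI2[OF ring_axioms ringL phi_hom])

lemma phi_zero: "phi \<zero> = \<zero>\<^bsub>L\<^esub>" by (simp add: phi_def L_simps)

lemma eL_pow: "eL [^]\<^bsub>L\<^esub> m = loc_class R s \<one> m"
proof (induction m)
  case 0 then show ?case by (simp add: L_simps)
next
  case (Suc m) then show ?case by (simp add: eL_def multL)
qed

lemma class_rep: "a \<in> carrier R \<Longrightarrow> loc_class R s a m = phi a \<otimes>\<^bsub>L\<^esub> eL [^]\<^bsub>L\<^esub> m"
  by (simp add: eL_pow phi_def multL)

lemma s_eL: "phi s \<otimes>\<^bsub>L\<^esub> eL = \<one>\<^bsub>L\<^esub>"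
proof -
  have "phi s \<otimes>\<^bsub>L\<^esub> eL = loc_class R s (s \<otimes> \<one>) 1" by (simp add: phi_def eL_def multL)
  also have "\<dots> = loc_class R s \<one> 0"
    by (rule class_eq) (auto simp: rel_iff m_comm)
  finally show ?thesis by (simp add: L_simps)
qed

lemma phi_pow: "a \<in> carrier R \<Longrightarrow> phi (a [^] (m::nat)) = phi a [^]\<^bsub>L\<^esub> m"
  by (induction m) auto

lemma s_eL_pow: "phi (s [^] (m::nat)) \<otimes>\<^bsub>L\<^esub> eL [^]\<^bsub>L\<^esub> m = \<one>\<^bsub>L\<^esub>"
  using L.nat_pow_distrib[of "phi s" eL m] by (simp add: phi_pow s_eL)

lemma L_rep: "x \<in> carrier L \<Longrightarrow> \<exists>a (m::nat). a \<in> carrier R \<and> x = phi a \<otimes>\<^bsub>L\<^esub> eL [^]\<^bsub>L\<^esub> m"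
proof -
  assume "x \<in> carrier L"
  then obtain a m where "a \<in> carrier R" "x = loc_class R s a m" using L_elem by blast
  then show ?thesis using class_rep by blast
qed

lemma phi_eq_zero: "a \<in> carrier R \<Longrightarrow> phi a = \<zero>\<^bsub>L\<^esub> \<Longrightarrow> \<exists>t::nat. s[^]t \<otimes> a = \<zero>"
  by (rule zero_class) (auto simp: phi_def L_simps)

end


context ring
begin

lemma finsum_lessThan_Suc:
  "f \<in> {..<Suc n} \<rightarrow> carrier R \<Longrightarrow> (\<Oplus>i\<in>{..<Suc n}. f i) = f n \<oplus> (\<Oplus>i\<in>{..<n}. f i)"
  by (simp add: lessThan_Suc Pi_def)

lemma ideal_finsum:
  fixes n :: nat
  assumes "ideal J R" "\<And>i. i < n \<Longrightarrow> f i \<in> J"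
  shows "(\<Oplus>i\<in>{..<n}. f i) \<in> J"
  using assms(2)
proof (induction n)
  case 0 then show ?case using assms(1) by (simp add: additive_subgroup.zero_closed ideal.axioms(1))
next
  case (Suc n)
  have c: "f \<in> {..<Suc n} \<rightarrow> carrier R" using Suc.prems ideal.Icarr[OF assms(1)] by auto
  show ?case unfolding finsum_lessThan_Suc[OF c]
    using Suc by (intro additive_subgroup.a_closed[OF ideal.axioms(1)[OF assms(1)]]) auto
qed

lemma finsum_swap:
  fixes n m :: nat
  assumes "\<And>i j. i < n \<Longrightarrow> j < m \<Longrightarrow> f i j \<in> carrier R"
  shows "(\<Oplus>i\<in>{..<n}. \<Oplus>j\<in>{..<m}. f i j) = (\<Oplus>j\<in>{..<m}. \<Oplus>i\<in>{..<n}. f i j)"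
  using assms
proof (induction n)
  case 0 then show ?case by (simp add: finsum_zero)
next
  case (Suc n)
  have "(\<Oplus>i\<in>{..<Suc n}. \<Oplus>j\<in>{..<m}. f i j) = (\<Oplus>j\<in>{..<m}. f n j) \<oplus> (\<Oplus>i\<in>{..<n}. \<Oplus>j\<in>{..<m}. f i j)"
    using Suc.prems by (intro finsum_lessThan_Suc) auto
  also have "\<dots> = (\<Oplus>j\<in>{..<m}. f n j) \<oplus> (\<Oplus>j\<in>{..<m}. \<Oplus>i\<in>{..<n}. f i j)"
    using Suc by simp
  also have "\<dots> = (\<Oplus>j\<in>{..<m}. f n j \<oplus> (\<Oplus>i\<in>{..<n}. f i j))"
    using Suc.prems by (intro finsum_addf[symmetric]) auto
  also have "\<dots> = (\<Oplus>j\<in>{..<m}. \<Oplus>i\<in>{..<Suc n}. f i j)"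
    using Suc.prems by (intro finsum_cong' refl) (auto simp: finsum_lessThan_Suc)
  finally show ?case .
qed

lemma lincomb_closed:
  "(\<And>i. i < n \<Longrightarrow> v i \<in> carrier R) \<Longrightarrow> (\<And>i. i < n \<Longrightarrow> a i \<in> carrier R) \<Longrightarrow> lincomb R n v a \<in> carrier R"
  unfolding lincomb_def by (intro finsum_closed) auto

lemma lincomb_smult:
  assumes "c \<in> carrier R" "\<And>i. i < n \<Longrightarrow> v i \<in> carrier R" "\<And>i. i < n \<Longrightarrow> a i \<in> carrier R"
  shows "c \<otimes> lincomb R n v a = lincomb R n (\<lambda>i. c \<otimes> v i) a"
  unfolding lincomb_def using assms
  by (subst finsum_rdistr) (auto intro!: finsum_cong' simp: m_assoc)

lemma lincomb_add:
  assumes "\<And>i. i < n \<Longrightarrow> v i \<in> carrier R" "\<And>i. i < n \<Longrightarrow> v' i \<in> carrier R" "\<And>i. i < n \<Longrightarrow> a i \<in> carrier R"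
  shows "lincomb R n v a \<oplus> lincomb R n v' a = lincomb R n (\<lambda>i. v i \<oplus> v' i) a"
proof -
  have "lincomb R n (\<lambda>i. v i \<oplus> v' i) a = (\<Oplus>i\<in>{..<n}. v i \<otimes> a i \<oplus> v' i \<otimes> a i)"
    unfolding lincomb_def using assms by (intro finsum_cong') (auto simp: l_distr)
  also have "\<dots> = lincomb R n v a \<oplus> lincomb R n v' a"
    unfolding lincomb_def using assms by (intro finsum_addf) auto
  finally show ?thesis by simp
qed

lemma lincomb_zero:
  assumes "\<And>i. i < n \<Longrightarrow> a i \<in> carrier R"
  shows "lincomb R n (\<lambda>i. \<zero>) a = \<zero>"
proof -
  have "lincomb R n (\<lambda>i. \<zero>) a = (\<Oplus>i\<in>{..<n}. \<zero>)"
    unfolding lincomb_def using assms by (intro finsum_cong') auto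
  then show ?thesis by simp
qed

lemma lincomb_vspan:
  fixes m :: nat
  assumes "\<And>j. j < m \<Longrightarrow> c j \<in> carrier R" "\<And>i j. i < n \<Longrightarrow> j < m \<Longrightarrow> w j i \<in> carrier R"
    "\<And>i. i < n \<Longrightarrow> a i \<in> carrier R"
  shows "lincomb R n (\<lambda>i. if i < n then (\<Oplus>j\<in>{..<m}. c j \<otimes> w j i) else \<zero>) a
       = (\<Oplus>j\<in>{..<m}. c j \<otimes> lincomb R n (w j) a)"
proof -
  have "lincomb R n (\<lambda>i. if i < n then (\<Oplus>j\<in>{..<m}. c j \<otimes> w j i) else \<zero>) a
      = (\<Oplus>i\<in>{..<n}. \<Oplus>j\<in>{..<m}. c j \<otimes> (w j i \<otimes> a i))"
    unfolding lincomb_def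
  proof (intro finsum_cong' refl)
    fix i assume i: "i \<in> {..<n}"
    have "(\<Oplus>j\<in>{..<m}. c j \<otimes> w j i) \<otimes> a i = (\<Oplus>j\<in>{..<m}. c j \<otimes> w j i \<otimes> a i)"
      using assms i by (intro finsum_ldistr) auto
    also have "\<dots> = (\<Oplus>j\<in>{..<m}. c j \<otimes> (w j i \<otimes> a i))"
      using assms i by (intro finsum_cong') (auto simp: m_assoc)
    finally show "(if i < n then \<Oplus>j\<in>{..<m}. c j \<otimes> w j i else \<zero>) \<otimes> a i = (\<Oplus>j\<in>{..<m}. c j \<otimes> (w j i \<otimes> a i))"
      using i by simp
  next
    show "(\<lambda>i. \<Oplus>j\<in>{..<m}. c j \<otimes> (w j i \<otimes> a i)) \<in> {..<n} \<rightarrow> carrier R"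
      using assms by (auto intro!: finsum_closed)
  qed
  also have "\<dots> = (\<Oplus>j\<in>{..<m}. \<Oplus>i\<in>{..<n}. c j \<otimes> (w j i \<otimes> a i))"
    using assms by (intro finsum_swap) auto
  also have "\<dots> = (\<Oplus>j\<in>{..<m}. c j \<otimes> lincomb R n (w j) a)"
    unfolding lincomb_def using assms
    by (intro finsum_cong' refl) (auto simp: finsum_rdistr)
  finally show ?thesis .
qed

end



context locz_ring
begin

lemma phi_lincomb:
  assumes "\<And>i. i < n \<Longrightarrow> u i \<in> carrier R" "\<And>i. i < n \<Longrightarrow> b i \<in> carrier R"
  shows "phi (lincomb R n u b) = lincomb L n (\<lambda>i. phi (u i)) (\<lambda>i. phi (b i))"
proof -
  have "phi (lincomb R n u b) = finsum L (phi \<circ> (\<lambda>i. u i \<otimes> b i)) {..<n}"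
    unfolding lincomb_def by (rule phi.hom_finsum) (use assms in auto)
  also have "\<dots> = lincomb L n (\<lambda>i. phi (u i)) (\<lambda>i. phi (b i))"
    unfolding lincomb_def
  proof (rule L.finsum_cong'[OF refl])
    show "(\<lambda>i. phi (u i) \<otimes>\<^bsub>L\<^esub> phi (b i)) \<in> {..<n} \<rightarrow> carrier L" using assms by auto
    show "(phi \<circ> (\<lambda>i. u i \<otimes> b i)) i = phi (u i) \<otimes>\<^bsub>L\<^esub> phi (b i)" if "i \<in> {..<n}" for i
      using assms that by simp
  qed
  finally show ?thesis .
qed

lemma main:
  assumes J: "ideal J L" "fin_gen_ideal L J"
    and U: "\<And>I. ideal I R \<Longrightarrow> fin_gen_ideal R I \<Longrightarrow> u_S_fin_pres_ideal_wrt R s I"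
  shows "fin_pres_ideal L J"
proof -
  obtain A where A: "finite A" "A \<subseteq> carrier L" "J = Idl\<^bsub>L\<^esub> A"
    using J(2) unfolding fin_gen_ideal_def by blast
  have "\<forall>x\<in>A. \<exists>a. \<exists>d::nat. a \<in> carrier R \<and> x = phi a \<otimes>\<^bsub>L\<^esub> eL [^]\<^bsub>L\<^esub> d"
    using A(2) L_rep by blast
  then obtain num where "\<forall>x\<in>A. \<exists>d::nat. num x \<in> carrier R \<and> x = phi (num x) \<otimes>\<^bsub>L\<^esub> eL [^]\<^bsub>L\<^esub> d"
    by (rule bchoice[elim_format]) blast
  then obtain den :: "_ \<Rightarrow> nat" where nd0: "\<forall>x\<in>A. num x \<in> carrier R \<and> x = phi (num x) \<otimes>\<^bsub>L\<^esub> eL [^]\<^bsub>L\<^esub> den x"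
    by (rule bchoice[elim_format]) blast
  have nd: "num x \<in> carrier R" "x = phi (num x) \<otimes>\<^bsub>L\<^esub> eL [^]\<^bsub>L\<^esub> den x" if "x \<in> A" for x
    using nd0 that by auto
  define N where "N = num ` A"
  have N: "finite N" "N \<subseteq> carrier R" using A nd by (auto simp: N_def)
  define I where "I = genideal R N"
  have I: "ideal I R" using genideal_ideal[OF N(2)] I_def by simp
  have "fin_gen_ideal R I" unfolding fin_gen_ideal_def I_def using N by blast
  then obtain n b m w where
    b: "\<forall>i<n. b i \<in> I" and w: "\<forall>j<m. w j \<in> rvec R n"
    and wk: "\<forall>v\<in>vspan R n m w. lincomb R n v b = \<zero>"
    and ker: "\<forall>v\<in>rvec R n. lincomb R n v b = \<zero> \<longrightarrow> (\<lambda>i. s \<otimes> v i) \<in> vspan R n m w"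
    and im: "\<forall>x\<in>I. s \<otimes> x \<in> {lincomb R n v b | v. v \<in> rvec R n}"
    using U[OF I] unfolding u_S_fin_pres_ideal_wrt_def by blast
  have bc: "\<And>i. i<n \<Longrightarrow> b i \<in> carrier R" using b ideal.Icarr[OF I] by blast
  have wc: "\<And>i j. j<m \<Longrightarrow> i<n \<Longrightarrow> w j i \<in> carrier R"
    and wz: "\<And>i j. j<m \<Longrightarrow> \<not> i<n \<Longrightarrow> w j i = \<zero>" using w by (auto simp: rvec_def)
  define B where "B = (\<lambda>i. phi (b i))"
  define W where "W = (\<lambda>j i. phi (w j i))"
  have Bc: "\<And>i. i<n \<Longrightarrow> B i \<in> carrier L" using bc by (simp add: B_def)
  have Wc: "\<And>i j. j<m \<Longrightarrow> i<n \<Longrightarrow> W j i \<in> carrier L" using wc by (simp add: W_def)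
  have W_rvec: "\<And>j. j<m \<Longrightarrow> W j \<in> rvec L n" using wc wz by (auto simp: rvec_def W_def phi_zero)
  have rvecL: "\<And>v i. v \<in> rvec L n \<Longrightarrow> i < n \<Longrightarrow> v i \<in> carrier L"
    and rvecL0: "\<And>v i. v \<in> rvec L n \<Longrightarrow> \<not> i < n \<Longrightarrow> v i = \<zero>\<^bsub>L\<^esub>" by (auto simp: rvec_def)
  have rvecR: "\<And>v i. v \<in> rvec R n \<Longrightarrow> i < n \<Longrightarrow> v i \<in> carrier R"
    and rvecR0: "\<And>v i. v \<in> rvec R n \<Longrightarrow> \<not> i < n \<Longrightarrow> v i = \<zero>" by (auto simp: rvec_def)

  have JR: "ideal {r \<in> carrier R. phi r \<in> J} R" by (rule phi.ideal_vimage[OF J(1)])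
  have "N \<subseteq> {r \<in> carrier R. phi r \<in> J}"
  proof
    fix a assume "a \<in> N"
    then obtain x where x: "x \<in> A" "a = num x" by (auto simp: N_def)
    have xJ: "x \<in> J" using A x(1) L.genideal_self by blast
    have ac: "a \<in> carrier R" using nd x by simp
    define d where "d = den x"
    have xe: "x = phi a \<otimes>\<^bsub>L\<^esub> eL [^]\<^bsub>L\<^esub> d" using nd[OF x(1)] x(2) d_def by simp
    have "x \<otimes>\<^bsub>L\<^esub> phi (s [^] d) = phi a \<otimes>\<^bsub>L\<^esub> (phi (s[^] d) \<otimes>\<^bsub>L\<^esub> eL[^]\<^bsub>L\<^esub> d)"
      using ac unfolding xe by (simp add: L.m_ac)
    also have "\<dots> = phi a" using s_eL_pow[of d] ac by simp
    finally have "phi a \<in> J" using xJ ideal.I_r_closed[OF J(1) xJ, of "phi (s [^] d)"] by simp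
    then show "a \<in> {r \<in> carrier R. phi r \<in> J}" using ac by auto
  qed
  then have IJ: "I \<subseteq> {r \<in> carrier R. phi r \<in> J}" unfolding I_def by (rule genideal_minimal[OF JR])

  define Img where "Img = {lincomb L n v B | v. v \<in> rvec L n}"
  have ImgJ: "Img \<subseteq> J"
  proof
    fix y assume "y \<in> Img"
    then obtain v where v: "v \<in> rvec L n" "y = lincomb L n v B" by (auto simp: Img_def)
    have "\<And>i. i<n \<Longrightarrow> v i \<otimes>\<^bsub>L\<^esub> B i \<in> J"
      using v(1) b IJ ideal.I_l_closed[OF J(1)] rvecL unfolding B_def by blast
    then show "y \<in> J" unfolding v lincomb_def by (rule L.ideal_finsum[OF J(1)])
  qed
  have Img_c: "Img \<subseteq> carrier L"
  proof
    fix y assume "y \<in> Img"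
    then obtain v where v: "v \<in> rvec L n" "y = lincomb L n v B" by (auto simp: Img_def)
    show "y \<in> carrier L" unfolding v(2) by (rule L.lincomb_closed) (use rvecL[OF v(1)] Bc in auto)
  qed
  have smult: "x \<otimes>\<^bsub>L\<^esub> y \<in> Img" if x: "x \<in> carrier L" and y: "y \<in> Img" for x y
  proof -
    obtain v where v: "v \<in> rvec L n" "y = lincomb L n v B" using y by (auto simp: Img_def)
    have e: "x \<otimes>\<^bsub>L\<^esub> y = lincomb L n (\<lambda>i. x \<otimes>\<^bsub>L\<^esub> v i) B"
      unfolding v(2) by (rule L.lincomb_smult) (use x rvecL[OF v(1)] Bc in auto)
    have r: "(\<lambda>i. x \<otimes>\<^bsub>L\<^esub> v i) \<in> rvec L n"
      unfolding rvec_def using x rvecL[OF v(1)] rvecL0[OF v(1)] by auto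
    show ?thesis unfolding Img_def using e r by blast
  qed
  have Img_ideal: "ideal Img L"
  proof (rule idealI[OF ringL])
    have sub: "Img \<subseteq> carrier L" by (rule Img_c)
    have ne: "Img \<noteq> {}"
    proof -
      have "(\<lambda>i. \<zero>\<^bsub>L\<^esub>) \<in> rvec L n" by (simp add: rvec_def)
      then show "Img \<noteq> {}" unfolding Img_def by blast
    qed
    have inv: "\<ominus>\<^bsub>L\<^esub> y \<in> Img" if y: "y \<in> Img" for y
    proof -
      have "\<ominus>\<^bsub>L\<^esub> y = (\<ominus>\<^bsub>L\<^esub> \<one>\<^bsub>L\<^esub>) \<otimes>\<^bsub>L\<^esub> y"
      proof -
        have yc: "y \<in> carrier L" using y Img_c by blast
        then show ?thesis by (simp add: L.l_minus)
      qed
      then show ?thesis using smult y by simp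
    qed
    have add: "y \<oplus>\<^bsub>L\<^esub> z \<in> Img" if y: "y \<in> Img" and z: "z \<in> Img" for y z
    proof -
      obtain v where v: "v \<in> rvec L n" "y = lincomb L n v B" using y by (auto simp: Img_def)
      obtain v' where v': "v' \<in> rvec L n" "z = lincomb L n v' B" using z by (auto simp: Img_def)
      have e: "y \<oplus>\<^bsub>L\<^esub> z = lincomb L n (\<lambda>i. v i \<oplus>\<^bsub>L\<^esub> v' i) B"
        unfolding v(2) v'(2) by (rule L.lincomb_add) (use rvecL[OF v(1)] rvecL[OF v'(1)] Bc in auto)
      have r: "(\<lambda>i. v i \<oplus>\<^bsub>L\<^esub> v' i) \<in> rvec L n"
        unfolding rvec_def using rvecL[OF v(1)] rvecL[OF v'(1)] rvecL0[OF v(1)] rvecL0[OF v'(1)] by auto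
      show ?thesis unfolding Img_def using e r by blast
    qed
    show "subgroup Img (add_monoid L)"
      apply (rule L.add.subgroupI)
      using sub ne inv add by (auto simp: a_inv_def[symmetric])
  next
    fix a x assume "a \<in> Img" "x \<in> carrier L"
    then show "x \<otimes>\<^bsub>L\<^esub> a \<in> Img" by (rule smult[rotated])
  next
    fix a x assume "a \<in> Img" "x \<in> carrier L"
    then show "a \<otimes>\<^bsub>L\<^esub> x \<in> Img" using smult[of x a] Img_c L.m_comm by auto
  qed
  have AImg: "A \<subseteq> Img"
  proof
    fix x assume x: "x \<in> A"
    define a where "a = num x"
    define d where "d = den x"
    have ac: "a \<in> carrier R" unfolding a_def by (rule nd(1)[OF x])
    have xa: "x = phi a \<otimes>\<^bsub>L\<^esub> eL [^]\<^bsub>L\<^esub> d" unfolding a_def d_def by (rule nd(2)[OF x])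
    have "a \<in> I" unfolding I_def using genideal_self[OF N(2)] x by (auto simp: a_def N_def)
    then obtain u where u: "u \<in> rvec R n" "s \<otimes> a = lincomb R n u b" using im by blast
    define c where "c = eL [^]\<^bsub>L\<^esub> Suc d"
    have cc: "c \<in> carrier L" by (simp add: c_def)
    have "phi (s \<otimes> a) \<otimes>\<^bsub>L\<^esub> c = (phi a \<otimes>\<^bsub>L\<^esub> eL [^]\<^bsub>L\<^esub> d) \<otimes>\<^bsub>L\<^esub> (phi s \<otimes>\<^bsub>L\<^esub> eL)"
      using ac by (simp add: c_def L.m_ac)
    also have "\<dots> = x" using xa ac by (simp add: s_eL)
    finally have "x = c \<otimes>\<^bsub>L\<^esub> phi (lincomb R n u b)" using ac cc by (simp add: u(2)[symmetric] L.m_comm)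
    also have "\<dots> = c \<otimes>\<^bsub>L\<^esub> lincomb L n (\<lambda>i. phi (u i)) B"
      unfolding B_def using rvecR[OF u(1)] bc by (subst phi_lincomb) auto
    also have "\<dots> = lincomb L n (\<lambda>i. c \<otimes>\<^bsub>L\<^esub> phi (u i)) B"
      using rvecR[OF u(1)] Bc cc by (intro L.lincomb_smult) auto
    finally have xe: "x = lincomb L n (\<lambda>i. c \<otimes>\<^bsub>L\<^esub> phi (u i)) B" .
    have "(\<lambda>i. c \<otimes>\<^bsub>L\<^esub> phi (u i)) \<in> rvec L n"
      unfolding rvec_def using rvecR[OF u(1)] rvecR0[OF u(1)] cc by (auto simp: phi_zero)
    then show "x \<in> Img" unfolding Img_def using xe by blast
  qed
  have JImg: "J = Img"
    using L.genideal_minimal[OF Img_ideal AImg] ImgJ A(3) by auto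

  have wk0: "lincomb R n (w j) b = \<zero>" if j: "j < m" for j
  proof -
    define cj where "cj = (\<lambda>j'. if j' = j then \<one> else \<zero>)"
    have "w j = (\<lambda>i. if i<n then (\<Oplus>j'\<in>{..<m}. cj j' \<otimes> w j' i) else \<zero>)"
    proof
      fix i show "w j i = (if i<n then (\<Oplus>j'\<in>{..<m}. cj j' \<otimes> w j' i) else \<zero>)"
      proof (cases "i<n")
        case True
        have "(\<Oplus>j'\<in>{..<m}. cj j' \<otimes> w j' i) = (\<Oplus>j'\<in>{..<m}. if j = j' then w j' i else \<zero>)"
          using wc True by (intro finsum_cong') (auto simp: cj_def)
        also have "\<dots> = w j i" using j wc True by (intro add.finprod_singleton) auto
        finally show ?thesis using True by simp
      next
        case False then show ?thesis using wz j by simp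
      qed
    qed
    moreover have "(\<lambda>i. if i<n then (\<Oplus>j'\<in>{..<m}. cj j' \<otimes> w j' i) else \<zero>) \<in> vspan R n m w"
      unfolding vspan_def by (rule CollectI, rule exI[of _ cj]) (auto simp: cj_def)
    ultimately have "w j \<in> vspan R n m w" by simp
    then show ?thesis using wk by blast
  qed

  have KerEq: "{v \<in> rvec L n. lincomb L n v B = \<zero>\<^bsub>L\<^esub>} = vspan L n m W"
  proof
    show "vspan L n m W \<subseteq> {v \<in> rvec L n. lincomb L n v B = \<zero>\<^bsub>L\<^esub>}"
    proof
      fix v assume "v \<in> vspan L n m W"
      then obtain c where c: "\<forall>j<m. c j \<in> carrier L"
        and v: "v = (\<lambda>i. if i<n then \<Oplus>\<^bsub>L\<^esub>j\<in>{..<m}. c j \<otimes>\<^bsub>L\<^esub> W j i else \<zero>\<^bsub>L\<^esub>)"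
        by (auto simp: vspan_def)
      have "v \<in> rvec L n" using c Wc by (auto simp: v rvec_def intro!: L.finsum_closed)
      moreover have "lincomb L n v B = \<zero>\<^bsub>L\<^esub>"
      proof -
        have "lincomb L n v B = (\<Oplus>\<^bsub>L\<^esub>j\<in>{..<m}. c j \<otimes>\<^bsub>L\<^esub> lincomb L n (W j) B)"
          unfolding v using c Wc Bc by (intro L.lincomb_vspan) auto
        also have "\<dots> = (\<Oplus>\<^bsub>L\<^esub>j\<in>{..<m}. \<zero>\<^bsub>L\<^esub>)"
        proof (intro L.finsum_cong' refl)
          fix j assume j: "j \<in> {..<m}"
          have "lincomb L n (W j) B = phi (lincomb R n (w j) b)"
            unfolding W_def B_def using j wc bc by (subst phi_lincomb) auto
          also have "\<dots> = \<zero>\<^bsub>L\<^esub>" using wk0 j by (simp add: phi_zero)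
          finally show "c j \<otimes>\<^bsub>L\<^esub> lincomb L n (W j) B = \<zero>\<^bsub>L\<^esub>" using c j by simp
        qed simp
        finally show ?thesis by simp
      qed
      ultimately show "v \<in> {v \<in> rvec L n. lincomb L n v B = \<zero>\<^bsub>L\<^esub>}" by simp
    qed
    show "{v \<in> rvec L n. lincomb L n v B = \<zero>\<^bsub>L\<^esub>} \<subseteq> vspan L n m W"
    proof
      fix v assume "v \<in> {v \<in> rvec L n. lincomb L n v B = \<zero>\<^bsub>L\<^esub>}"
      then have v: "v \<in> rvec L n" and v0: "lincomb L n v B = \<zero>\<^bsub>L\<^esub>" by auto
      have "\<forall>i\<in>{..<n}. \<exists>a. \<exists>k::nat. a \<in> carrier R \<and> v i = phi a \<otimes>\<^bsub>L\<^esub> eL[^]\<^bsub>L\<^esub> k"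
        using v rvecL L_rep by blast
      then obtain u where "\<forall>i\<in>{..<n}. \<exists>k::nat. u i \<in> carrier R \<and> v i = phi (u i) \<otimes>\<^bsub>L\<^esub> eL[^]\<^bsub>L\<^esub> k"
        by (rule bchoice[elim_format]) blast
      then obtain k :: "nat \<Rightarrow> nat" where uk0: "\<forall>i\<in>{..<n}. u i \<in> carrier R \<and> v i = phi (u i) \<otimes>\<^bsub>L\<^esub> eL[^]\<^bsub>L\<^esub> k i"
        by (rule bchoice[elim_format]) blast
      have uc: "\<And>i. i<n \<Longrightarrow> u i \<in> carrier R" and vu: "\<And>i. i<n \<Longrightarrow> v i = phi (u i) \<otimes>\<^bsub>L\<^esub> eL[^]\<^bsub>L\<^esub> k i"
        using uk0 by auto
      define K where "K = (\<Sum>i<n. k i)"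
      have kK: "\<And>i. i<n \<Longrightarrow> k i \<le> K" unfolding K_def by (rule member_le_sum) auto
      define u' where "u' = (\<lambda>i. if i<n then u i \<otimes> s [^] (K - k i) else \<zero>)"
      have u'r: "u' \<in> rvec R n" by (auto simp: u'_def rvec_def uc)
      have u'c: "\<And>i. i<n \<Longrightarrow> u' i \<in> carrier R" using u'r rvecR by blast
      have vu': "v i = eL[^]\<^bsub>L\<^esub> K \<otimes>\<^bsub>L\<^esub> phi (u' i)" if i: "i<n" for i
      proof -
        have eK: "eL[^]\<^bsub>L\<^esub> K = eL[^]\<^bsub>L\<^esub> k i \<otimes>\<^bsub>L\<^esub> eL[^]\<^bsub>L\<^esub> (K - k i)"
          using kK[OF i] by (simp add: L.nat_pow_mult)
        have "eL[^]\<^bsub>L\<^esub> K \<otimes>\<^bsub>L\<^esub> phi (u' i)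
            = (phi (u i) \<otimes>\<^bsub>L\<^esub> eL[^]\<^bsub>L\<^esub> k i) \<otimes>\<^bsub>L\<^esub> (phi (s [^] (K - k i)) \<otimes>\<^bsub>L\<^esub> eL[^]\<^bsub>L\<^esub> (K - k i))"
          unfolding eK using i uc by (simp add: u'_def L.m_ac)
        also have "\<dots> = v i" using i uc vu by (simp add: s_eL_pow)
        finally show ?thesis by simp
      qed
      have "lincomb L n v B = lincomb L n (\<lambda>i. eL[^]\<^bsub>L\<^esub> K \<otimes>\<^bsub>L\<^esub> phi (u' i)) B"
        unfolding lincomb_def using vu' u'c Bc by (intro L.finsum_cong') auto
      also have "\<dots> = eL[^]\<^bsub>L\<^esub> K \<otimes>\<^bsub>L\<^esub> lincomb L n (\<lambda>i. phi (u' i)) B"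
        using u'c Bc by (intro L.lincomb_smult[symmetric]) auto
      also have "lincomb L n (\<lambda>i. phi (u' i)) B = phi (lincomb R n u' b)"
        unfolding B_def using u'c bc by (subst phi_lincomb) auto
      finally have e0: "eL[^]\<^bsub>L\<^esub> K \<otimes>\<^bsub>L\<^esub> phi (lincomb R n u' b) = \<zero>\<^bsub>L\<^esub>" using v0 by simp
      have lc: "lincomb R n u' b \<in> carrier R" using u'c bc by (intro lincomb_closed) auto
      have "phi (lincomb R n u' b) = (phi (s [^] K) \<otimes>\<^bsub>L\<^esub> eL[^]\<^bsub>L\<^esub> K) \<otimes>\<^bsub>L\<^esub> phi (lincomb R n u' b)"
        using lc by (simp add: s_eL_pow)
      also have "\<dots> = phi (s [^] K) \<otimes>\<^bsub>L\<^esub> (eL[^]\<^bsub>L\<^esub> K \<otimes>\<^bsub>L\<^esub> phi (lincomb R n u' b))"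
        using lc by (simp add: L.m_assoc)
      also have "\<dots> = \<zero>\<^bsub>L\<^esub>" unfolding e0 by simp
      finally obtain t :: nat where t: "s [^] t \<otimes> lincomb R n u' b = \<zero>"
        using phi_eq_zero[OF lc] by blast
      define u'' where "u'' = (\<lambda>i. s [^] t \<otimes> u' i)"
      have u''r: "u'' \<in> rvec R n" unfolding rvec_def using u'c rvecR0[OF u'r] by (auto simp: u''_def)
      have "lincomb R n u'' b = s [^] t \<otimes> lincomb R n u' b"
        unfolding u''_def using u'c bc by (intro lincomb_smult[symmetric]) auto
      then have "lincomb R n u'' b = \<zero>" using t by simp
      then have "(\<lambda>i. s \<otimes> u'' i) \<in> vspan R n m w" using ker u''r by blast
      then obtain c where c: "\<forall>j<m. c j \<in> carrier R"
        and cu: "(\<lambda>i. s \<otimes> u'' i) = (\<lambda>i. if i<n then (\<Oplus>j\<in>{..<m}. c j \<otimes> w j i) else \<zero>)"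
        unfolding vspan_def by blast
      define M where "M = Suc (t + K)"
      define c' where "c' = (\<lambda>j. phi (c j) \<otimes>\<^bsub>L\<^esub> eL[^]\<^bsub>L\<^esub> M)"
      have c'c: "\<forall>j<m. c' j \<in> carrier L" using c by (simp add: c'_def)
      have "v = (\<lambda>i. if i < n then \<Oplus>\<^bsub>L\<^esub>j\<in>{..<m}. c' j \<otimes>\<^bsub>L\<^esub> W j i else \<zero>\<^bsub>L\<^esub>)"
      proof
        fix i show "v i = (if i < n then \<Oplus>\<^bsub>L\<^esub>j\<in>{..<m}. c' j \<otimes>\<^bsub>L\<^esub> W j i else \<zero>\<^bsub>L\<^esub>)"
        proof (cases "i < n")
          case False then show ?thesis using rvecL0[OF v False] by simp
        next
          case i: True
          have "(\<Oplus>\<^bsub>L\<^esub>j\<in>{..<m}. c' j \<otimes>\<^bsub>L\<^esub> W j i)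
              = (\<Oplus>\<^bsub>L\<^esub>j\<in>{..<m}. phi (c j \<otimes> w j i) \<otimes>\<^bsub>L\<^esub> eL[^]\<^bsub>L\<^esub> M)"
            using c wc i by (intro L.finsum_cong') (auto simp: c'_def W_def L.m_ac)
          also have "\<dots> = (\<Oplus>\<^bsub>L\<^esub>j\<in>{..<m}. phi (c j \<otimes> w j i)) \<otimes>\<^bsub>L\<^esub> eL[^]\<^bsub>L\<^esub> M"
            using c wc i by (intro L.finsum_ldistr[symmetric]) auto
          also have "(\<Oplus>\<^bsub>L\<^esub>j\<in>{..<m}. phi (c j \<otimes> w j i)) = phi (\<Oplus>j\<in>{..<m}. c j \<otimes> w j i)"
            using c wc i by (subst phi.hom_finsum) (auto simp: o_def)
          also have "(\<Oplus>j\<in>{..<m}. c j \<otimes> w j i) = s \<otimes> u'' i"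
            using fun_cong[OF cu, of i] i by simp
          also have "s \<otimes> u'' i = s [^] Suc t \<otimes> u' i"
            using u'c[OF i] by (simp add: u''_def m_ac)
          finally have "(\<Oplus>\<^bsub>L\<^esub>j\<in>{..<m}. c' j \<otimes>\<^bsub>L\<^esub> W j i)
              = phi (s [^] Suc t \<otimes> u' i) \<otimes>\<^bsub>L\<^esub> eL[^]\<^bsub>L\<^esub> M" .
          also have "\<dots> = (phi (s [^] Suc t) \<otimes>\<^bsub>L\<^esub> eL[^]\<^bsub>L\<^esub> Suc t) \<otimes>\<^bsub>L\<^esub> (eL[^]\<^bsub>L\<^esub> K \<otimes>\<^bsub>L\<^esub> phi (u' i))"
          proof -
            have "eL[^]\<^bsub>L\<^esub> M = eL[^]\<^bsub>L\<^esub> Suc t \<otimes>\<^bsub>L\<^esub> eL[^]\<^bsub>L\<^esub> K"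
              unfolding M_def by (metis add_Suc L.nat_pow_mult eL_carr)
            then show ?thesis using u'c[OF i] by (simp add: L.m_ac del: nat_pow_Suc L.nat_pow_Suc)
          qed
          also have "\<dots> = v i"
          proof -
            have h: "phi (s [^] Suc t) \<otimes>\<^bsub>L\<^esub> eL[^]\<^bsub>L\<^esub> Suc t = \<one>\<^bsub>L\<^esub>" by (rule s_eL_pow)
            show ?thesis unfolding h using vu'[OF i] u'c[OF i] by simp
          qed
          finally show ?thesis using i by simp
        qed
      qed
      then show "v \<in> vspan L n m W"
        unfolding vspan_def using c'c by blast
    qed
  qed
  show ?thesis unfolding fin_pres_ideal_def
  proof (intro exI conjI)
    show "\<forall>i<n. B i \<in> carrier L" using Bc by blast
    show "J = {lincomb L n v B | v. v \<in> rvec L n}" using JImg Img_def by simp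
    show "\<forall>j<m. W j \<in> rvec L n" using W_rvec by blast
    show "{v \<in> rvec L n. lincomb L n v B = \<zero>\<^bsub>L\<^esub>} = vspan L n m W" by (rule KerEq)
  qed
qed

end


theorem proposition3p14:
  fixes R :: "('a, 'b) ring_scheme" and S :: "'a set" and s :: 'a
  assumes "cring R" and "mult_subset R S" and "s \<in> S"
    and "u_S_coherent_wrt R s"
  shows "coherent_ring (localization R s)"
proof -
  have sc: "s \<in> carrier R" using assms(2,3) unfolding mult_subset_def by blast
  show ?thesis unfolding coherent_ring_def
  proof (intro allI impI)
    fix I assume H: "ideal I (localization R s) \<and> fin_gen_ideal (localization R s) I"
    have rL: "ring (localization R s)" using H ideal.axioms(2) by blast
    have lz: "locz_ring R s"
      unfolding locz_ring_def locz_def locz_axioms_def locz_ring_axioms_def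
      using assms(1) sc rL by blast
    show "fin_pres_ideal (localization R s) I"
      using locz_ring.main[OF lz] H assms(4) unfolding u_S_coherent_wrt_def by blast
  qed
qed

end
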